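(* Let $\Gamma$ be an $l$-hyperflower with $t$ twins on $N$ vertices, with eigenvalues $\lambda_1\le\cdots\le\lambda_N$ of its (signless) normalized Laplacian. Then the spectrum of $\Gamma$ is given by: $0$, with multiplicity $N-l$; $t$, with multiplicity $l-1$; and $\lambda_N=N-tl+t$.
   Context: A hypergraph $\Gamma=(\mathcal{V},\mathcal{H})$ has a finite vertex set $\mathcal{V}=\{v_1,\ldots,v_N\}$ and a set $\mathcal{H}$ of nonempty subsets of $\mathcal{V}$ (hyperedges); standing assumption: no isolated vertices. $\deg(v)$ is the number of hyperedges containing $v$, $D$ the diagonal degree matrix, $A$ the matrix with $A_{ii}=0$ and $A_{ij}=-\#\{h\in\mathcal{H}: v_i,v_j\in h\}$ for $i\ne j$, and the (signless) normalized Laplacian is $L=\mathrm{Id}-D^{-1}A$, with real eigenvalues $\lambda_1\le\cdots\le\lambda_N$. An $l$-hyperflower with $t$ twins is a hypergraph whose vertex set is $\mathcal{V}=U\sqcup\mathcal{W}$, where $U$ consists of $t\cdot l$ distinct peripheral vertices $v_{zj}$ ($z=1,\ldots,t$, $j=1,\ldots,l$), and there is a nonempty set $h_1\subseteq\mathcal{W}$ such that $\mathcal{H}=\{h_1\cup\{v_{1j},\ldots,v_{tj}\}: j=1,\ldots,l\}$ (by the no-isolated-vertex assumption, $\mathcal{W}=h_1$). *)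

theory Defs
  imports "Jordan_Normal_Form.Char_Poly"
begin

text \<open>A hypergraph on the vertex set {0..<N} (vertex v_i is represented by the index i-1),
  given by a set H of nonempty hyperedges.\<close>

definition is_hypergraph :: "nat \<Rightarrow> nat set set \<Rightarrow> bool" where
  "is_hypergraph N H \<longleftrightarrow> (\<forall>h\<in>H. h \<noteq> {} \<and> h \<subseteq> {0..<N})"

definition no_isolated_vertices :: "nat \<Rightarrow> nat set set \<Rightarrow> bool" where
  "no_isolated_vertices N H \<longleftrightarrow> (\<forall>i<N. \<exists>h\<in>H. i \<in> h)"

definition hdeg :: "nat set set \<Rightarrow> nat \<Rightarrow> nat" where
  "hdeg H i = card {h\<in>H. i \<in> h}"

definition deg_mat :: "nat \<Rightarrow> nat set set \<Rightarrow> real mat" where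
  "deg_mat N H = mat N N (\<lambda>(i,j). if i = j then real (hdeg H i) else 0)"

text \<open>D^{-1}, written explicitly (degrees are positive when there are no isolated vertices).\<close>
definition inv_deg_mat :: "nat \<Rightarrow> nat set set \<Rightarrow> real mat" where
  "inv_deg_mat N H = mat N N (\<lambda>(i,j). if i = j then 1 / real (hdeg H i) else 0)"

definition adj_mat :: "nat \<Rightarrow> nat set set \<Rightarrow> real mat" where
  "adj_mat N H = mat N N (\<lambda>(i,j). if i = j then 0
                        else - real (card {h\<in>H. i \<in> h \<and> j \<in> h}))"

definition norm_laplacian :: "nat \<Rightarrow> nat set set \<Rightarrow> real mat" where
  "norm_laplacian N H = 1\<^sub>m N - inv_deg_mat N H * adj_mat N H"

definition is_hyperflower :: "nat \<Rightarrow> nat set set \<Rightarrow> nat \<Rightarrow> nat \<Rightarrow> bool" where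
  "is_hyperflower N H l t \<longleftrightarrow>
     (\<exists>p h1. inj_on p ({..<t} \<times> {..<l}) \<and> p ` ({..<t} \<times> {..<l}) \<subseteq> {0..<N} \<and>
        h1 \<noteq> {} \<and> h1 \<subseteq> {0..<N} - p ` ({..<t} \<times> {..<l}) \<and>
        H = {h1 \<union> {p (z, j) | z. z < t} | j. j < l})"

end

theory Submission
  imports Defs
begin

lemma sylvester_det:
  fixes U V :: "real mat" and y :: real
  assumes U: "U \<in> carrier_mat n m" and V: "V \<in> carrier_mat m n" and y: "y \<noteq> 0"
  shows "det (y \<cdot>\<^sub>m 1\<^sub>m n - U * V) * y ^ m = y ^ n * det (y \<cdot>\<^sub>m 1\<^sub>m m - V * U)"
proof -
  have UV: "U * V \<in> carrier_mat n n" and VU: "V * U \<in> carrier_mat m m" using U V by auto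
  define M1 where "M1 = four_block_mat (1\<^sub>m n) U (0\<^sub>m m n) (1\<^sub>m m)"
  define M2 where "M2 = four_block_mat (y \<cdot>\<^sub>m 1\<^sub>m n - U * V) (0\<^sub>m n m) V (1\<^sub>m m)"
  define M3 where "M3 = four_block_mat (y \<cdot>\<^sub>m 1\<^sub>m n) (0\<^sub>m n m) V (1\<^sub>m m - (1/y) \<cdot>\<^sub>m (V * U))"
  define M4 where "M4 = four_block_mat (1\<^sub>m n) ((1/y) \<cdot>\<^sub>m U) (0\<^sub>m m n) (1\<^sub>m m)"
  have e1: "M1 * M2 = four_block_mat (y \<cdot>\<^sub>m 1\<^sub>m n) U V (1\<^sub>m m)"
    unfolding M1_def M2_def
    apply (subst mult_four_block_mat[of _ n n _ m _ m _ _ n _ m])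
    using U V UV by auto
  have e2: "M3 * M4 = four_block_mat (y \<cdot>\<^sub>m 1\<^sub>m n) U V (1\<^sub>m m)"
    unfolding M3_def M4_def
    apply (subst mult_four_block_mat[of _ n n _ m _ m _ _ n _ m])
    using U V UV VU apply auto
    apply (rule cong_four_block_mat)
    apply (rule refl)
    apply (rule eq_matI; use y U in \<open>auto simp: mult_smult_distrib\<close>)
    apply (rule refl)
    apply (rule eq_matI; use y U V in \<open>auto simp: mult_smult_distrib\<close>)
    done
  have d1: "det M1 = 1" unfolding M1_def
    by (subst det_four_block_mat_lower_left_zero[of _ n _ m]) (use U in auto)
  have d2: "det M2 = det (y \<cdot>\<^sub>m 1\<^sub>m n - U * V)" unfolding M2_def
    by (subst det_four_block_mat_upper_right_zero[of _ n _ m]) (use U V in auto)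
  have d4: "det M4 = 1" unfolding M4_def
    by (subst det_four_block_mat_lower_left_zero[of _ n _ m]) (use U in auto)
  have "1\<^sub>m m - (1/y) \<cdot>\<^sub>m (V * U) = (1/y) \<cdot>\<^sub>m (y \<cdot>\<^sub>m 1\<^sub>m m - V * U)"
    by (rule eq_matI) (use VU U V y in \<open>auto simp: diff_divide_distrib\<close>)
  hence d3: "det M3 = y ^ n * ((1/y) ^ m * det (y \<cdot>\<^sub>m 1\<^sub>m m - V * U))" unfolding M3_def
    by (subst det_four_block_mat_upper_right_zero[of _ n _ m]) (use U V VU in auto)
  have c: "M1 \<in> carrier_mat (n+m) (n+m)" "M2 \<in> carrier_mat (n+m) (n+m)"
     "M3 \<in> carrier_mat (n+m) (n+m)" "M4 \<in> carrier_mat (n+m) (n+m)"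
    unfolding M1_def M2_def M3_def M4_def using U V VU UV by auto
  have "det (M1 * M2) = det (M3 * M4)" using e1 e2 by simp
  hence "det M1 * det M2 = det M3 * det M4" using c by (simp add: det_mult)
  hence "det (y \<cdot>\<^sub>m 1\<^sub>m n - U * V) = y ^ n * ((1/y) ^ m * det (y \<cdot>\<^sub>m 1\<^sub>m m - V * U))"
    using d1 d2 d3 d4 by simp
  thus ?thesis using y by (simp add: power_one_over field_simps)
qed
lemma poly_char_poly_det:
  fixes A :: "real mat"
  assumes A: "A \<in> carrier_mat n n"
  shows "poly (char_poly A) x = det (x \<cdot>\<^sub>m 1\<^sub>m n - A)"
  unfolding char_poly_def
  by (rule poly_det_cong[of _ n]) (use A in \<open>auto simp: char_poly_matrix_def\<close>)

lemma det_tJ: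
  fixes a t x :: real
  assumes l: "l \<ge> 1" and x: "x \<noteq> t"
  shows "det (x \<cdot>\<^sub>m 1\<^sub>m l - mat l l (\<lambda>(j,j'). a + (if j = j' then t else 0)))
       = (x - t) ^ (l - 1) * (x - t - a * real l)"
proof -
  define C where "C = mat l 1 (\<lambda>_. a)"
  define R where "R = mat 1 l (\<lambda>_. (1::real))"
  have C: "C \<in> carrier_mat l 1" and R: "R \<in> carrier_mat 1 l" unfolding C_def R_def by auto
  have e1: "x \<cdot>\<^sub>m 1\<^sub>m l - mat l l (\<lambda>(j,j'). a + (if j = j' then t else 0))
      = (x - t) \<cdot>\<^sub>m 1\<^sub>m l - C * R"
    by (rule eq_matI) (auto simp: C_def R_def scalar_prod_def)
  have e2: "(x - t) \<cdot>\<^sub>m 1\<^sub>m 1 - R * C = mat 1 1 (\<lambda>_. x - t - a * real l)"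
    by (rule eq_matI) (auto simp: C_def R_def scalar_prod_def)
  have d: "det (mat 1 1 (\<lambda>_. x - t - a * real l)) = x - t - a * real l"
    by (subst det_single) auto
  have "det ((x - t) \<cdot>\<^sub>m 1\<^sub>m l - C * R) * (x - t) ^ 1 = (x - t) ^ l * det ((x - t) \<cdot>\<^sub>m 1\<^sub>m 1 - R * C)"
    by (rule sylvester_det[OF C R]) (use x in auto)
  hence "det ((x - t) \<cdot>\<^sub>m 1\<^sub>m l - C * R) * (x - t) = (x - t) ^ l * (x - t - a * real l)"
    using e2 d by simp
  moreover have "(x - t) ^ l = (x - t) ^ (l - 1) * (x - t)" using l
    by (metis Suc_diff_1 less_le_trans less_numeral_extra(1) mult.commute power_Suc)
  ultimately have "det ((x - t) \<cdot>\<^sub>m 1\<^sub>m l - C * R) * (x - t) = ((x - t) ^ (l - 1) * (x - t - a * real l)) * (x - t)"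
    by simp
  hence "det ((x - t) \<cdot>\<^sub>m 1\<^sub>m l - C * R) = (x - t) ^ (l - 1) * (x - t - a * real l)"
    using x by simp
  thus ?thesis unfolding e1 .
qed

lemma poly_eq_except2:
  fixes p q :: "real poly"
  assumes "\<And>x. x \<noteq> a \<Longrightarrow> x \<noteq> b \<Longrightarrow> poly p x = poly q x"
  shows "p = q"
proof (rule ccontr)
  assume "p \<noteq> q"
  hence "p - q \<noteq> 0" by simp
  hence fin: "finite {x. poly (p - q) x = 0}" by (rule poly_roots_finite)
  have "UNIV - {a, b} \<subseteq> {x. poly (p - q) x = 0}" using assms by auto
  hence "finite (UNIV - {a, b} :: real set)" using fin finite_subset by blast
  hence "finite (UNIV :: real set)" by simp
  thus False by (simp add: infinite_UNIV_char_0)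
qed

lemma card_filter_image:
  assumes "inj_on E S"
  shows "card {h \<in> E ` S. Q h} = card {j \<in> S. Q (E j)}"
proof -
  have "{h \<in> E ` S. Q h} = E ` {j \<in> S. Q (E j)}" by auto
  moreover have "inj_on E {j \<in> S. Q (E j)}" using assms by (rule inj_on_subset) auto
  ultimately show ?thesis by (simp add: card_image)
qed

lemma sum_if_const:
  "finite A \<Longrightarrow> (\<Sum>j\<in>A. if Q j then (c::real) else 0) = real (card {j\<in>A. Q j}) * c"
  by (simp add: sum.inter_filter[symmetric])

theorem mainTheorem7:
  fixes N l t :: nat and H :: "nat set set"
  assumes "is_hypergraph N H" and "no_isolated_vertices N H"
    and "is_hyperflower N H l t" and "1 \<le> t"
  shows "char_poly (norm_laplacian N H) =
           [:0, 1:] ^ (N - l) * [:- real t, 1:] ^ (l - 1)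
             * [:- (real N - real t * real l + real t), 1:]
       \<and> (\<forall>x. poly (char_poly (norm_laplacian N H)) x = 0
              \<longrightarrow> x \<le> real N - real t * real l + real t)"
proof -
  obtain p h1 where inj: "inj_on p ({..<t} \<times> {..<l})"
    and psub: "p ` ({..<t} \<times> {..<l}) \<subseteq> {0..<N}" and h1ne: "h1 \<noteq> {}"
    and h1sub: "h1 \<subseteq> {0..<N} - p ` ({..<t} \<times> {..<l})"
    and Hdef: "H = {h1 \<union> {p (z, j) | z. z < t} | j. j < l}"
    using assms(3) unfolding is_hyperflower_def by blast
  define E where "E j = h1 \<union> {p (z, j) | z. z < t}" for j
  define P where "P = p ` ({..<t} \<times> {..<l})"
  have HE: "H = E ` {..<l}" unfolding Hdef E_def by auto
  have memP: "i \<in> E j \<longleftrightarrow> i = p (z0, j0) \<and> j = j0"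
    if "z0 < t" "j0 < l" "j < l" "i = p (z0, j0)" for i j z0 j0
  proof
    assume "i \<in> E j"
    moreover have "i \<notin> h1" using that h1sub by auto
    ultimately obtain z where "z < t" "i = p (z, j)" unfolding E_def by auto
    thus "i = p (z0, j0) \<and> j = j0" using that inj unfolding inj_on_def by blast
  next
    assume "i = p (z0, j0) \<and> j = j0"
    thus "i \<in> E j" unfolding E_def using that by auto
  qed
  have injE: "inj_on E {..<l}"
  proof (rule inj_onI)
    fix j j' assume j: "j \<in> {..<l}" and j': "j' \<in> {..<l}" and e: "E j = E j'"
    have "p (0, j) \<in> E j" using assms(4) unfolding E_def by auto
    hence "p (0, j) \<in> E j'" using e by simp
    thus "j = j'" using memP[of 0 j j' "p (0, j)"] assms(4) j j' by auto
  qed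
  have l1: "l \<ge> 1"
  proof (rule ccontr)
    assume "\<not> l \<ge> 1"
    hence "H = {}" using HE by auto
    moreover obtain i where "i \<in> h1" using h1ne by auto
    hence "i < N" using h1sub by auto
    ultimately show False using assms(2) unfolding no_isolated_vertices_def by auto
  qed
  have cover: "{0..<N} = h1 \<union> P"
  proof
    show "h1 \<union> P \<subseteq> {0..<N}" using h1sub psub unfolding P_def by auto
    show "{0..<N} \<subseteq> h1 \<union> P"
    proof
      fix i assume "i \<in> {0..<N}"
      then obtain h where "h \<in> H" "i \<in> h" using assms(2) unfolding no_isolated_vertices_def by auto
      then show "i \<in> h1 \<union> P" unfolding HE E_def P_def by auto
    qed
  qed
  have disj: "h1 \<inter> P = {}" using h1sub unfolding P_def by auto
  have finh1: "finite h1" and finP: "finite P" using cover by (metis finite_Un finite_atLeastLessThan)+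
  have cardP: "card P = t * l" unfolding P_def using inj by (simp add: card_image card_cartesian_product)
  have cardN: "N = card h1 + t * l"
    using card_Un_disjoint[OF finh1 finP disj] cover cardP by (metis card_atLeastLessThan diff_zero)
  have degE: "hdeg H i = card {j \<in> {..<l}. i \<in> E j}" for i
    unfolding hdeg_def HE by (rule card_filter_image[OF injE])
  have deg_h1: "hdeg H i = l" if "i \<in> h1" for i
    unfolding degE using that by (simp add: E_def)
  have deg_P: "hdeg H i = 1" if iP: "i \<in> P" for i
  proof -
    obtain z0 j0 where z: "z0 < t" "j0 < l" "i = p (z0, j0)" using iP unfolding P_def by auto
    have "{j \<in> {..<l}. i \<in> E j} = {j0}" using memP[OF z(1,2) _ z(3)] z by auto
    thus ?thesis unfolding degE by simp
  qed
  have degpos: "hdeg H i > 0" if "i < N" for i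
  proof -
    have "i \<in> h1 \<union> P" using that cover by auto
    thus ?thesis using deg_h1 deg_P l1 by auto
  qed
  have cnt: "card {h \<in> H. i \<in> h \<and> k \<in> h} = card {j \<in> {..<l}. i \<in> E j \<and> k \<in> E j}" for i k
    unfolding HE by (rule card_filter_image[OF injE])
  define U where "U = mat N l (\<lambda>(i,j). if i \<in> E j then 1 / real (hdeg H i) else 0)"
  define V where "V = mat l N (\<lambda>(j,k). if k \<in> E j then 1 else (0::real))"
  have U: "U \<in> carrier_mat N l" and V: "V \<in> carrier_mat l N" unfolding U_def V_def by auto
  have L: "norm_laplacian N H = U * V"
  proof (rule eq_matI)
    fix i k assume i: "i < dim_row (U * V)" and k: "k < dim_col (U * V)"
    hence i: "i < N" and k: "k < N" using U V by auto
    have s1: "row (inv_deg_mat N H) i \<bullet> col (adj_mat N H) k = adj_mat N H $$ (i, k) / real (hdeg H i)"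
    proof -
      have dA: "dim_row (adj_mat N H) = N" "dim_col (adj_mat N H) = N" unfolding adj_mat_def by simp_all
      have "row (inv_deg_mat N H) i \<bullet> col (adj_mat N H) k
          = (\<Sum>m\<in>{0..<N}. if i = m then adj_mat N H $$ (i, k) / real (hdeg H i) else 0)"
        unfolding scalar_prod_def dA
        by (rule sum.cong) (use i k in \<open>auto simp: inv_deg_mat_def dA\<close>)
      also have "\<dots> = adj_mat N H $$ (i, k) / real (hdeg H i)" using i by simp
      finally show ?thesis .
    qed
    have s2: "(U * V) $$ (i, k) = real (card {j \<in> {..<l}. i \<in> E j \<and> k \<in> E j}) / real (hdeg H i)"
    proof -
      have "(U * V) $$ (i, k) = (\<Sum>j\<in>{0..<l}. if i \<in> E j \<and> k \<in> E j then 1 / real (hdeg H i) else 0)"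
        using i k U V unfolding U_def V_def by (auto simp: scalar_prod_def intro!: sum.cong)
      also have "\<dots> = real (card {j \<in> {0..<l}. i \<in> E j \<and> k \<in> E j}) * (1 / real (hdeg H i))"
        by (rule sum_if_const) simp
      finally show ?thesis by (simp add: lessThan_atLeast0)
    qed
    have dims: "dim_row (inv_deg_mat N H) = N" "dim_col (adj_mat N H) = N"
      "dim_col (inv_deg_mat N H) = N" "dim_row (adj_mat N H) = N"
      unfolding inv_deg_mat_def adj_mat_def by simp_all
    have ent: "norm_laplacian N H $$ (i, k) = (if i = k then 1 else 0) - row (inv_deg_mat N H) i \<bullet> col (adj_mat N H) k"
      unfolding norm_laplacian_def using i k dims by simp
    have aent: "adj_mat N H $$ (i, k) = (if i = k then 0 else - real (card {h\<in>H. i \<in> h \<and> k \<in> h}))"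
      unfolding adj_mat_def using i k by simp
    show "norm_laplacian N H $$ (i, k) = (U * V) $$ (i, k)"
      unfolding ent s1 s2 aent using degpos[OF i] by (auto simp: degE cnt card_gt_0_iff)
  qed (use U V in \<open>auto simp: norm_laplacian_def inv_deg_mat_def adj_mat_def\<close>)
  define a where "a = real (card h1) / real l"
  have VU: "V * U = mat l l (\<lambda>(j,j'). a + (if j = j' then real t else 0))"
  proof (rule eq_matI)
    fix j j' assume j: "j < dim_row (mat l l (\<lambda>(j,j'). a + (if j = j' then real t else 0)))"
      and j': "j' < dim_col (mat l l (\<lambda>(j,j'). a + (if j = j' then real t else 0)))"
    hence j: "j < l" and j': "j' < l" by auto
    define f where "f i = (if i \<in> E j \<and> i \<in> E j' then 1 / real (hdeg H i) else 0)" for i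
    have "(V * U) $$ (j, j') = (\<Sum>i\<in>{0..<N}. f i)"
      using j j' U V unfolding U_def V_def f_def by (auto simp: scalar_prod_def intro!: sum.cong)
    also have "\<dots> = (\<Sum>i\<in>h1. f i) + (\<Sum>i\<in>P. f i)"
      unfolding cover by (rule sum.union_disjoint[OF finh1 finP disj])
    also have "(\<Sum>i\<in>h1. f i) = (\<Sum>i\<in>h1. 1 / real l)"
      by (rule sum.cong) (auto simp: f_def deg_h1 E_def)
    also have "(\<Sum>i\<in>P. f i) = (\<Sum>i\<in>P. if i \<in> E j \<and> i \<in> E j' then 1 else 0)"
      by (rule sum.cong) (auto simp: f_def deg_P)
    also have "\<dots> = real (card {i \<in> P. i \<in> E j \<and> i \<in> E j'}) * 1"
      by (rule sum_if_const[OF finP])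
    also have "{i \<in> P. i \<in> E j \<and> i \<in> E j'} = (if j = j' then p ` ({..<t} \<times> {j}) else {})"
    proof -
      have "i \<in> E j \<and> i \<in> E j' \<longleftrightarrow> j = j' \<and> i \<in> p ` ({..<t} \<times> {j})" if "i \<in> P" for i
      proof -
        obtain z0 j0 where z: "z0 < t" "j0 < l" "i = p (z0, j0)" using \<open>i \<in> P\<close> unfolding P_def by auto
        show ?thesis using memP[OF z(1,2) j z(3)] memP[OF z(1,2) j' z(3)] z inj j j'
          by (auto simp: inj_on_def) 
      qed
      moreover have "p ` ({..<t} \<times> {j}) \<subseteq> P" unfolding P_def using j by auto
      ultimately show ?thesis by auto
    qed
    also have "card (if j = j' then p ` ({..<t} \<times> {j}) else {}) = (if j = j' then t else 0)"
    proof -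
      have "inj_on p ({..<t} \<times> {j})" by (rule inj_on_subset[OF inj]) (use j in auto)
      thus ?thesis by (cases "j = j'") (simp_all add: card_image card_cartesian_product)
    qed
    finally show "(V * U) $$ (j, j') = mat l l (\<lambda>(j,j'). a + (if j = j' then real t else 0)) $$ (j, j')"
      using j j' by (simp add: a_def)
  qed (use U V in auto)
  have Lc: "norm_laplacian N H \<in> carrier_mat N N" unfolding L using U V by auto
  have Nl: "N \<ge> l" using cardN l1 assms(4) h1ne finh1
    by (metis add_leE card_0_eq le_add2 mult_le_mono1 mult_1 order_trans)
  have rN: "real N = real (card h1) + real t * real l" using cardN by simp
  define R where "R = [:0, 1:] ^ (N - l) * [:- real t, 1:] ^ (l - 1)
             * [:- (real N - real t * real l + real t), 1:]"
  have polyR: "poly R x = x ^ (N - l) * (x - real t) ^ (l - 1) * (x - real t - real (card h1))" for x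
    unfolding R_def by (simp add: poly_power rN algebra_simps)
  have eq: "char_poly (norm_laplacian N H) = R"
  proof (rule poly_eq_except2[of 0 "real t"])
    fix x :: real assume x0: "x \<noteq> 0" and xt: "x \<noteq> real t"
    have "poly (char_poly (norm_laplacian N H)) x = det (x \<cdot>\<^sub>m 1\<^sub>m N - U * V)"
      by (subst poly_char_poly_det[OF Lc]) (simp add: L)
    moreover have "det (x \<cdot>\<^sub>m 1\<^sub>m N - U * V) * x ^ l = x ^ N * det (x \<cdot>\<^sub>m 1\<^sub>m l - V * U)"
      by (rule sylvester_det[OF U V x0])
    moreover have "det (x \<cdot>\<^sub>m 1\<^sub>m l - V * U) = (x - real t) ^ (l - 1) * (x - real t - a * real l)"
      unfolding VU by (rule det_tJ[OF l1 xt])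
    moreover have "a * real l = real (card h1)" unfolding a_def using l1 by simp
    moreover have "x ^ N = x ^ (N - l) * x ^ l" using Nl by (simp add: power_add[symmetric])
    ultimately have "poly (char_poly (norm_laplacian N H)) x * x ^ l = poly R x * x ^ l"
      unfolding polyR by (simp add: algebra_simps)
    thus "poly (char_poly (norm_laplacian N H)) x = poly R x" using x0 by simp
  qed
  have roots: "x \<le> real N - real t * real l + real t" if "poly (char_poly (norm_laplacian N H)) x = 0" for x
  proof -
    have "x ^ (N - l) * (x - real t) ^ (l - 1) * (x - real t - real (card h1)) = 0"
      using that unfolding eq polyR .
    hence "x = 0 \<or> x = real t \<or> x = real t + real (card h1)" by auto
    thus ?thesis using rN by auto
  qed
  show ?thesis using eq roots unfolding R_def by blast
qed

end
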